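(* Let $N\in\mathbb{N}$ and let $\gamma_1,\dots,\gamma_N\ge 0$. Let $\Phi_1,\dots,\Phi_N$ be independent random variables such that, for each $i$, $\Phi_i$ has the wrapped normal distribution of variance $\gamma_i$, i.e. $\Phi_i$ has the law of $Y_i \bmod 2\pi$ with $Y_i\sim\mathcal{N}(0,\gamma_i)$, with density $$f_{\Phi_i}(y)=\frac{1}{\sqrt{2\pi\gamma_i}}\sum_{m=-\infty}^{\infty}\exp\Big[\frac{-(y+2m\pi)^2}{2\gamma_i}\Big],\qquad 0\le y<2\pi .$$ For $\mathcal{S}\subseteq\{1,\dots,N\}$ define the beamforming gain $\overline{G}(\mathcal{S}):=\sum_{i\in\mathcal{S}}\sum_{j\in\mathcal{S}}\cos(\Phi_i-\Phi_j)$, and let $v_i:=\exp(-\gamma_i)$. Then $$\mathbb{E}\big[\overline{G}(\mathcal{S})\big]=|\mathcal{S}|+\sum_{i\in\mathcal{S}}\sum_{\substack{j\in\mathcal{S}\\ j\ne i}}\sqrt{v_iv_j},$$ $$\mathrm{Var}\big(\overline{G}(\mathcal{S})\big)=\sum_{i\in\mathcal{S}}\sum_{\substack{j\in\mathcal{S}\\ j\ne i}}(1-v_iv_j)^2+2\sum_{i\in\mathcal{S}}\sum_{\substack{j\in\mathcal{S}\\ j\ne i}}\sum_{\substack{k\in\mathcal{S}\\ k\ne i,\ k\ne j}}(1-v_i)^2\sqrt{v_jv_k}.$$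
   Context: Setting: $N$ agents transmit a common signal to a client by distributed beamforming. Because of Gaussian localization errors, after the phase adjustments chosen in the paper, the total phase $\Phi_i$ of agent $i$ is a wrapped normal random variable as described, with $\gamma_i\ge 0$ called the effective localization error of agent $i$; the $\Phi_i$ are independent across agents. The quantity $\overline{G}(\mathcal{S})$ is the beamforming gain of the subset $\mathcal{S}$ of agents participating. *)

theory Defs
  imports "HOL-Probability.Probability"
begin

definition wrap2pi :: "real \<Rightarrow> real" where
  "wrap2pi y = y - 2 * pi * of_int \<lfloor>y / (2 * pi)\<rfloor>"

definition centred_normal :: "real \<Rightarrow> real measure" where
  "centred_normal g =
     (if 0 < g then density lborel (normal_density 0 (sqrt g)) else return borel 0)"

definition wrapped_normal :: "real \<Rightarrow> real measure" where
  "wrapped_normal g = distr (centred_normal g) borel wrap2pi"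

definition beam_gain :: "(nat \<Rightarrow> real) \<Rightarrow> nat set \<Rightarrow> real" where
  "beam_gain \<Phi> S = (\<Sum>i\<in>S. \<Sum>j\<in>S. cos (\<Phi> i - \<Phi> j))"

end

theory Submission
  imports Defs
begin


lemma borel_measurable_cis[measurable]:
  "f \<in> borel_measurable M \<Longrightarrow> (\<lambda>x. cis (f x)) \<in> borel_measurable M"
  by (rule borel_measurable_continuous_on[where f=cis]) (auto intro!: continuous_intros)

lemma centred_normal_cis:
  assumes g: "0 \<le> g"
  shows "integral\<^sup>L (centred_normal g) (\<lambda>y. cis (c * y)) = complex_of_real (exp (- (c\<^sup>2 * g) / 2))"
proof (cases "g = 0")
  case True
  then show ?thesis unfolding centred_normal_def by (simp, subst integral_return) auto
next
  case False
  then have gp: "0 < g" using g by simp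
  define \<sigma> where "\<sigma> = sqrt g"
  have sp: "0 < \<sigma>" using gp by (simp add: \<sigma>_def)
  have "integral\<^sup>L (centred_normal g) (\<lambda>y. cis (c * y))
      = (\<integral>x. normal_density 0 \<sigma> x *\<^sub>R cis (c * x) \<partial>lborel)"
    unfolding centred_normal_def using gp \<sigma>_def
    by (simp add: integral_density)
  also have "\<dots> = \<bar>\<sigma>\<bar> *\<^sub>R (\<integral>x. normal_density 0 \<sigma> (0 + \<sigma> * x) *\<^sub>R cis (c * (0 + \<sigma> * x)) \<partial>lborel)"
    by (rule lborel_integral_real_affine) (use sp in simp)
  also have "\<dots> = (\<integral>x. std_normal_density x *\<^sub>R cis ((c * \<sigma>) * x) \<partial>lborel)"
  proof -
    have eq: "\<sigma> * normal_density 0 \<sigma> (\<sigma> * x) = std_normal_density x" for x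
      using sp by (simp add: normal_density_def real_sqrt_mult field_simps power2_eq_square)
    have "\<bar>\<sigma>\<bar> *\<^sub>R (\<integral>x. normal_density 0 \<sigma> (0 + \<sigma> * x) *\<^sub>R cis (c * (0 + \<sigma> * x)) \<partial>lborel)
        = (\<integral>x. \<sigma> *\<^sub>R (normal_density 0 \<sigma> (\<sigma> * x) *\<^sub>R cis (c * (\<sigma> * x))) \<partial>lborel)"
      using sp by (simp only: abs_of_pos add_0_left integral_scaleR_right[symmetric])
    also have "\<dots> = (\<integral>x. std_normal_density x *\<^sub>R cis ((c * \<sigma>) * x) \<partial>lborel)"
      by (rule Bochner_Integration.integral_cong) (simp_all add: eq[symmetric] mult.assoc)
    finally show ?thesis .
  qed
  also have "\<dots> = char std_normal_distribution (c * \<sigma>)"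
    unfolding char_def by (simp add: integral_density cis_conv_exp)
  also have "\<dots> = complex_of_real (exp (- (c\<^sup>2 * g) / 2))"
    using gp by (simp add: char_std_normal_distribution \<sigma>_def power_mult_distrib)
  finally show ?thesis .
qed

lemma cis_minus_2pi_int: "cis (x - 2 * pi * of_int k) = cis x"
proof -
  have "cis (x - 2 * pi * of_int k) = cis x * cis (2 * pi * of_int (- k))"
    by (simp add: cis_mult)
  also have "cis (2 * pi * of_int (- k)) = 1"
    by (rule cis_multiple_2pi) simp
  finally show ?thesis by simp
qed

lemma wrap2pi_measurable[measurable]: "wrap2pi \<in> borel_measurable borel"
  unfolding wrap2pi_def by measurable

lemma sets_centred_normal[measurable_cong]: "sets (centred_normal g) = sets borel"
  by (simp add: centred_normal_def)

lemma wrapped_normal_cis: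
  assumes g: "0 \<le> g"
  shows "integral\<^sup>L (wrapped_normal g) (\<lambda>y. cis (of_int n * y)) = complex_of_real (exp (- ((of_int n)\<^sup>2 * g) / 2))"
proof -
  have "integral\<^sup>L (wrapped_normal g) (\<lambda>y. cis (of_int n * y))
      = integral\<^sup>L (centred_normal g) (\<lambda>y. cis (of_int n * wrap2pi y))"
    unfolding wrapped_normal_def by (subst integral_distr) auto
  also have "\<dots> = integral\<^sup>L (centred_normal g) (\<lambda>y. cis (of_int n * y))"
  proof (rule Bochner_Integration.integral_cong[OF refl])
    fix y
    have "of_int n * wrap2pi y = of_int n * y - 2 * pi * of_int (n * \<lfloor>y / (2 * pi)\<rfloor>)"
      by (simp add: wrap2pi_def algebra_simps)
    then show "cis (of_int n * wrap2pi y) = cis (of_int n * y)"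
      by (simp only: cis_minus_2pi_int)
  qed
  also have "\<dots> = complex_of_real (exp (- ((of_int n)\<^sup>2 * g) / 2))"
    by (rule centred_normal_cis[OF g])
  finally show ?thesis .
qed

lemma cis_sum: "finite A \<Longrightarrow> cis (\<Sum>t\<in>A. f t) = (\<Prod>t\<in>A. cis (f t))"
  by (induction A rule: finite_induct) (auto simp: cis_mult[symmetric])

definition ee :: "nat \<Rightarrow> nat \<Rightarrow> nat \<Rightarrow> nat \<Rightarrow> nat \<Rightarrow> int" where
  "ee i j k l t = of_bool (t = i) - of_bool (t = j) + of_bool (t = k) - of_bool (t = l)"

definition PP :: "(nat \<Rightarrow> real) \<Rightarrow> nat \<Rightarrow> nat \<Rightarrow> nat \<Rightarrow> nat \<Rightarrow> real" where
  "PP g i j k l = (\<Prod>t\<in>{i,j,k,l}. exp (- ((of_int (ee i j k l t))\<^sup>2 * g t) / 2))"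

lemma sum_ee:
  fixes f :: "nat \<Rightarrow> real"
  assumes "finite A" "i \<in> A" "j \<in> A" "k \<in> A" "l \<in> A"
  shows "(\<Sum>t\<in>A. of_int (ee i j k l t) * f t) = f i - f j + f k - f l"
proof -
  have "(\<Sum>t\<in>A. of_int (ee i j k l t) * f t)
     = (\<Sum>t\<in>A. (if t = i then f t else 0)) - (\<Sum>t\<in>A. (if t = j then f t else 0))
       + (\<Sum>t\<in>A. (if t = k then f t else 0)) - (\<Sum>t\<in>A. (if t = l then f t else 0))"
  proof -
    have pw: "of_int (ee i j k l t) * f t = (if t = i then f t else 0) - (if t = j then f t else 0)
       + (if t = k then f t else 0) - (if t = l then f t else 0)" for t
      by (simp add: ee_def algebra_simps)
    show ?thesis by (simp only: pw sum.distrib sum_subtractf)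
  qed
  also have "\<dots> = f i - f j + f k - f l"
    using assms by (simp add: sum.delta')
  finally show ?thesis .
qed

lemma integral_sum2:
  fixes f :: "'i \<Rightarrow> 'j \<Rightarrow> 'a \<Rightarrow> real"
  assumes "\<And>i j. i \<in> A \<Longrightarrow> j \<in> B \<Longrightarrow> integrable M (f i j)"
  shows "integral\<^sup>L M (\<lambda>x. \<Sum>i\<in>A. \<Sum>j\<in>B. f i j x) = (\<Sum>i\<in>A. \<Sum>j\<in>B. integral\<^sup>L M (f i j))"
proof -
  have "integral\<^sup>L M (\<lambda>x. \<Sum>i\<in>A. \<Sum>j\<in>B. f i j x) = (\<Sum>i\<in>A. integral\<^sup>L M (\<lambda>x. \<Sum>j\<in>B. f i j x))"
    by (rule Bochner_Integration.integral_sum) (use assms in \<open>auto intro!: Bochner_Integration.integrable_sum\<close>)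
  also have "\<dots> = (\<Sum>i\<in>A. \<Sum>j\<in>B. integral\<^sup>L M (f i j))"
    by (intro sum.cong refl Bochner_Integration.integral_sum) (use assms in auto)
  finally show ?thesis .
qed

lemma integrable_sum2:
  fixes f :: "'i \<Rightarrow> 'j \<Rightarrow> 'a \<Rightarrow> real"
  assumes "\<And>i j. i \<in> A \<Longrightarrow> j \<in> B \<Longrightarrow> integrable M (f i j)"
  shows "integrable M (\<lambda>x. \<Sum>i\<in>A. \<Sum>j\<in>B. f i j x)"
  using assms by (auto intro!: Bochner_Integration.integrable_sum)

lemma integral_sum4:
  fixes f :: "'i \<Rightarrow> 'i \<Rightarrow> 'i \<Rightarrow> 'i \<Rightarrow> 'a \<Rightarrow> real"
  assumes "\<And>i j k l. i \<in> A \<Longrightarrow> j \<in> A \<Longrightarrow> k \<in> A \<Longrightarrow> l \<in> A \<Longrightarrow> integrable M (f i j k l)"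
  shows "integral\<^sup>L M (\<lambda>x. \<Sum>i\<in>A. \<Sum>j\<in>A. \<Sum>k\<in>A. \<Sum>l\<in>A. f i j k l x)
     = (\<Sum>i\<in>A. \<Sum>j\<in>A. \<Sum>k\<in>A. \<Sum>l\<in>A. integral\<^sup>L M (f i j k l))"
proof -
  have "integral\<^sup>L M (\<lambda>x. \<Sum>i\<in>A. \<Sum>j\<in>A. (\<lambda>i j x. \<Sum>k\<in>A. \<Sum>l\<in>A. f i j k l x) i j x)
     = (\<Sum>i\<in>A. \<Sum>j\<in>A. integral\<^sup>L M ((\<lambda>i j x. \<Sum>k\<in>A. \<Sum>l\<in>A. f i j k l x) i j))"
    by (rule integral_sum2) (intro integrable_sum2, use assms in auto)
  also have "\<dots> = (\<Sum>i\<in>A. \<Sum>j\<in>A. \<Sum>k\<in>A. \<Sum>l\<in>A. integral\<^sup>L M (f i j k l))"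
    by (intro sum.cong refl integral_sum2) (use assms in auto)
  finally show ?thesis by simp
qed

locale beam = prob_space M for M :: "'a measure" +
  fixes N :: nat and \<gamma> :: "nat \<Rightarrow> real" and \<Phi> :: "nat \<Rightarrow> 'a \<Rightarrow> real"
  assumes nonneg: "\<And>i. i \<in> {1..N} \<Longrightarrow> 0 \<le> \<gamma> i"
    and indep: "indep_vars (\<lambda>_. borel) \<Phi> {1..N}"
    and meas: "\<And>i. i \<in> {1..N} \<Longrightarrow> \<Phi> i \<in> borel_measurable M"
    and dist: "\<And>i. i \<in> {1..N} \<Longrightarrow> distr M borel (\<Phi> i) = wrapped_normal (\<gamma> i)"
begin

lemma E_cis1:
  assumes t: "t \<in> {1..N}"
  shows "expectation (\<lambda>\<omega>. cis (of_int n * \<Phi> t \<omega>)) = complex_of_real (exp (- ((of_int n)\<^sup>2 * \<gamma> t) / 2))"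
proof -
  have "expectation (\<lambda>\<omega>. cis (of_int n * \<Phi> t \<omega>)) = integral\<^sup>L (distr M borel (\<Phi> t)) (\<lambda>y. cis (of_int n * y))"
    using meas[OF t] by (subst integral_distr) auto
  also have "\<dots> = complex_of_real (exp (- ((of_int n)\<^sup>2 * \<gamma> t) / 2))"
    unfolding dist[OF t] by (rule wrapped_normal_cis[OF nonneg[OF t]])
  finally show ?thesis .
qed

lemma E_cis_sum:
  assumes A: "finite A" "A \<subseteq> {1..N}"
  shows "expectation (\<lambda>\<omega>. cis (\<Sum>t\<in>A. of_int (e t) * \<Phi> t \<omega>))
       = complex_of_real (\<Prod>t\<in>A. exp (- ((of_int (e t))\<^sup>2 * \<gamma> t) / 2))"
proof -
  have ind: "indep_vars (\<lambda>_. borel) (\<lambda>t \<omega>. cis (of_int (e t) * \<Phi> t \<omega>)) A"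
    using indep_vars_compose2[OF indep_vars_subset[OF indep A(2)], of "\<lambda>t x. cis (of_int (e t) * x)" "\<lambda>_. borel"]
    by auto
  have int: "integrable M (\<lambda>\<omega>. cis (of_int (e t) * \<Phi> t \<omega>))" if "t \<in> A" for t
    using that A meas[of t] by (intro integrable_const_bound[where B=1]) auto
  have "expectation (\<lambda>\<omega>. cis (\<Sum>t\<in>A. of_int (e t) * \<Phi> t \<omega>))
      = expectation (\<lambda>\<omega>. \<Prod>t\<in>A. cis (of_int (e t) * \<Phi> t \<omega>))"
    using A(1) by (simp add: cis_sum)
  also have "\<dots> = (\<Prod>t\<in>A. expectation (\<lambda>\<omega>. cis (of_int (e t) * \<Phi> t \<omega>)))"
    by (rule indep_vars_lebesgue_integral[OF A(1) ind int])
  also have "\<dots> = (\<Prod>t\<in>A. complex_of_real (exp (- ((of_int (e t))\<^sup>2 * \<gamma> t) / 2)))"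
    using A by (intro prod.cong refl E_cis1) auto
  finally show ?thesis by simp
qed

lemma E_cos_sum:
  assumes A: "finite A" "A \<subseteq> {1..N}"
  shows "expectation (\<lambda>\<omega>. cos (\<Sum>t\<in>A. of_int (e t) * \<Phi> t \<omega>))
       = (\<Prod>t\<in>A. exp (- ((of_int (e t))\<^sup>2 * \<gamma> t) / 2))"
proof -
  have m: "(\<lambda>\<omega>. cis (\<Sum>t\<in>A. of_int (e t) * \<Phi> t \<omega>)) \<in> borel_measurable M"
    using A meas by (intro borel_measurable_cis borel_measurable_sum) (auto)
  have int: "integrable M (\<lambda>\<omega>. cis (\<Sum>t\<in>A. of_int (e t) * \<Phi> t \<omega>))"
    using m by (intro integrable_const_bound[where B=1]) auto
  have "expectation (\<lambda>\<omega>. cos (\<Sum>t\<in>A. of_int (e t) * \<Phi> t \<omega>))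
      = Re (expectation (\<lambda>\<omega>. cis (\<Sum>t\<in>A. of_int (e t) * \<Phi> t \<omega>)))"
    using integral_Re[OF int] by simp
  also have "\<dots> = (\<Prod>t\<in>A. exp (- ((of_int (e t))\<^sup>2 * \<gamma> t) / 2))"
    by (simp only: E_cis_sum[OF A] Re_complex_of_real)
  finally show ?thesis .
qed

lemma E_cos4:
  assumes "i \<in> {1..N}" "j \<in> {1..N}" "k \<in> {1..N}" "l \<in> {1..N}"
  shows "expectation (\<lambda>\<omega>. cos (\<Phi> i \<omega> - \<Phi> j \<omega> + \<Phi> k \<omega> - \<Phi> l \<omega>)) = PP \<gamma> i j k l"
proof -
  have "expectation (\<lambda>\<omega>. cos (\<Phi> i \<omega> - \<Phi> j \<omega> + \<Phi> k \<omega> - \<Phi> l \<omega>))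
     = expectation (\<lambda>\<omega>. cos (\<Sum>t\<in>{i,j,k,l}. of_int (ee i j k l t) * \<Phi> t \<omega>))"
    by (subst sum_ee) auto
  also have "\<dots> = PP \<gamma> i j k l"
    unfolding PP_def using assms by (intro E_cos_sum) auto
  finally show ?thesis .
qed

lemma E_cos2:
  assumes "i \<in> {1..N}" "j \<in> {1..N}"
  shows "expectation (\<lambda>\<omega>. cos (\<Phi> i \<omega> - \<Phi> j \<omega>)) = PP \<gamma> i j i i"
  using E_cos4[OF assms(1,2,1,1)] by simp

lemma int_W: "i \<in> {1..N} \<Longrightarrow> j \<in> {1..N} \<Longrightarrow> integrable M (\<lambda>\<omega>. cos (\<Phi> i \<omega> - \<Phi> j \<omega>))"
  using meas[of i] meas[of j] by (intro integrable_const_bound[where B=1]) auto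

lemma int_WW: "i \<in> {1..N} \<Longrightarrow> j \<in> {1..N} \<Longrightarrow> k \<in> {1..N} \<Longrightarrow> l \<in> {1..N} \<Longrightarrow>
   integrable M (\<lambda>\<omega>. cos (\<Phi> i \<omega> - \<Phi> j \<omega>) * cos (\<Phi> k \<omega> - \<Phi> l \<omega>))"
  using meas[of i] meas[of j] meas[of k] meas[of l]
  by (intro integrable_const_bound[where B=1]) (auto simp: abs_mult intro!: mult_le_one)

lemma E_WW:
  assumes "i \<in> {1..N}" "j \<in> {1..N}" "k \<in> {1..N}" "l \<in> {1..N}"
  shows "expectation (\<lambda>\<omega>. cos (\<Phi> i \<omega> - \<Phi> j \<omega>) * cos (\<Phi> k \<omega> - \<Phi> l \<omega>))
     = (PP \<gamma> i j k l + PP \<gamma> i j l k) / 2"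
proof -
  have int1: "integrable M (\<lambda>\<omega>. cos (\<Phi> i \<omega> - \<Phi> j \<omega> + \<Phi> l \<omega> - \<Phi> k \<omega>))"
    using assms meas[of i] meas[of j] meas[of k] meas[of l] by (intro integrable_const_bound[where B=1]) auto
  have int2: "integrable M (\<lambda>\<omega>. cos (\<Phi> i \<omega> - \<Phi> j \<omega> + \<Phi> k \<omega> - \<Phi> l \<omega>))"
    using assms meas[of i] meas[of j] meas[of k] meas[of l] by (intro integrable_const_bound[where B=1]) auto
  have "expectation (\<lambda>\<omega>. cos (\<Phi> i \<omega> - \<Phi> j \<omega>) * cos (\<Phi> k \<omega> - \<Phi> l \<omega>))
     = expectation (\<lambda>\<omega>. (cos (\<Phi> i \<omega> - \<Phi> j \<omega> + \<Phi> l \<omega> - \<Phi> k \<omega>) + cos (\<Phi> i \<omega> - \<Phi> j \<omega> + \<Phi> k \<omega> - \<Phi> l \<omega>)) / 2)"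
    by (rule Bochner_Integration.integral_cong[OF refl]) (simp add: cos_times_cos algebra_simps)
  also have "\<dots> = (expectation (\<lambda>\<omega>. cos (\<Phi> i \<omega> - \<Phi> j \<omega> + \<Phi> l \<omega> - \<Phi> k \<omega>))
        + expectation (\<lambda>\<omega>. cos (\<Phi> i \<omega> - \<Phi> j \<omega> + \<Phi> k \<omega> - \<Phi> l \<omega>))) / 2"
    using int1 int2 by simp
  also have "\<dots> = (PP \<gamma> i j k l + PP \<gamma> i j l k) / 2"
    using assms by (simp add: E_cos4)
  finally show ?thesis .
qed

lemma mean_G:
  assumes S: "S \<subseteq> {1..N}"
  shows "expectation (\<lambda>\<omega>. beam_gain (\<lambda>i. \<Phi> i \<omega>) S) = (\<Sum>i\<in>S. \<Sum>j\<in>S. PP \<gamma> i j i i)"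
proof -
  have "expectation (\<lambda>\<omega>. beam_gain (\<lambda>i. \<Phi> i \<omega>) S) = (\<Sum>i\<in>S. \<Sum>j\<in>S. expectation (\<lambda>\<omega>. cos (\<Phi> i \<omega> - \<Phi> j \<omega>)))"
  proof -
    have I: "integrable M (\<lambda>\<omega>. cos (\<Phi> i \<omega> - \<Phi> j \<omega>))" if "i \<in> S" "j \<in> S" for i j
      using that S int_W by blast
    show ?thesis
      unfolding beam_gain_def
      by (rule integral_sum2) (use I in auto)
  qed
  also have "\<dots> = (\<Sum>i\<in>S. \<Sum>j\<in>S. PP \<gamma> i j i i)"
    using S by (intro sum.cong refl E_cos2) auto
  finally show ?thesis .
qed

lemma E_term:
  assumes "i \<in> {1..N}" "j \<in> {1..N}" "k \<in> {1..N}" "l \<in> {1..N}"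
  shows "integrable M (\<lambda>\<omega>. (cos (\<Phi> i \<omega> - \<Phi> j \<omega>) - a) * (cos (\<Phi> k \<omega> - \<Phi> l \<omega>) - b))"
    and "expectation (\<lambda>\<omega>. (cos (\<Phi> i \<omega> - \<Phi> j \<omega>) - a) * (cos (\<Phi> k \<omega> - \<Phi> l \<omega>) - b))
     = (PP \<gamma> i j k l + PP \<gamma> i j l k) / 2 - a * PP \<gamma> k l k k - b * PP \<gamma> i j i i + a * b"
proof -
  have eq: "(\<lambda>\<omega>. (cos (\<Phi> i \<omega> - \<Phi> j \<omega>) - a) * (cos (\<Phi> k \<omega> - \<Phi> l \<omega>) - b))
    = (\<lambda>\<omega>. cos (\<Phi> i \<omega> - \<Phi> j \<omega>) * cos (\<Phi> k \<omega> - \<Phi> l \<omega>) - a * cos (\<Phi> k \<omega> - \<Phi> l \<omega>)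
          - b * cos (\<Phi> i \<omega> - \<Phi> j \<omega>) + a * b)"
    by (auto simp: algebra_simps)
  have i1: "integrable M (\<lambda>\<omega>. cos (\<Phi> i \<omega> - \<Phi> j \<omega>) * cos (\<Phi> k \<omega> - \<Phi> l \<omega>))"
    using int_WW assms by blast
  have i2: "integrable M (\<lambda>\<omega>. cos (\<Phi> k \<omega> - \<Phi> l \<omega>))" "integrable M (\<lambda>\<omega>. cos (\<Phi> i \<omega> - \<Phi> j \<omega>))"
    using int_W assms by blast+
  show "integrable M (\<lambda>\<omega>. (cos (\<Phi> i \<omega> - \<Phi> j \<omega>) - a) * (cos (\<Phi> k \<omega> - \<Phi> l \<omega>) - b))"
    unfolding eq using i1 i2 by simp
  show "expectation (\<lambda>\<omega>. (cos (\<Phi> i \<omega> - \<Phi> j \<omega>) - a) * (cos (\<Phi> k \<omega> - \<Phi> l \<omega>) - b))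
     = (PP \<gamma> i j k l + PP \<gamma> i j l k) / 2 - a * PP \<gamma> k l k k - b * PP \<gamma> i j i i + a * b"
    unfolding eq using i1 i2 assms by (simp add: E_WW E_cos2 prob_space)
qed

lemma var_G:
  assumes S: "S \<subseteq> {1..N}"
  shows "variance (\<lambda>\<omega>. beam_gain (\<lambda>i. \<Phi> i \<omega>) S) =
    (\<Sum>i\<in>S. \<Sum>j\<in>S. \<Sum>k\<in>S. \<Sum>l\<in>S. (PP \<gamma> i j k l + PP \<gamma> i j l k) / 2 - PP \<gamma> i j i i * PP \<gamma> k l k k)"
proof -
  have fin: "finite S" using S finite_subset by blast
  define m where "m i j = PP \<gamma> i j i i" for i j
  define W where "W i j \<omega> = cos (\<Phi> i \<omega> - \<Phi> j \<omega>)" for i j \<omega>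
  have pw: "(beam_gain (\<lambda>i. \<Phi> i \<omega>) S - (\<Sum>i\<in>S. \<Sum>j\<in>S. m i j))\<^sup>2
      = (\<Sum>i\<in>S. \<Sum>j\<in>S. \<Sum>k\<in>S. \<Sum>l\<in>S. (W i j \<omega> - m i j) * (W k l \<omega> - m k l))" for \<omega>
  proof -
    have "beam_gain (\<lambda>i. \<Phi> i \<omega>) S - (\<Sum>i\<in>S. \<Sum>j\<in>S. m i j) = (\<Sum>i\<in>S. \<Sum>j\<in>S. W i j \<omega> - m i j)"
      unfolding beam_gain_def W_def by (simp add: sum_subtractf)
    then show ?thesis
      unfolding power2_eq_square by (simp only: sum_distrib_right) (simp only: sum_distrib_left)
  qed
  have "variance (\<lambda>\<omega>. beam_gain (\<lambda>i. \<Phi> i \<omega>) S)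
     = expectation (\<lambda>\<omega>. (\<Sum>i\<in>S. \<Sum>j\<in>S. \<Sum>k\<in>S. \<Sum>l\<in>S. (W i j \<omega> - m i j) * (W k l \<omega> - m k l)))"
    unfolding mean_G[OF S] m_def[symmetric] pw ..
  also have "\<dots> = (\<Sum>i\<in>S. \<Sum>j\<in>S. \<Sum>k\<in>S. \<Sum>l\<in>S. expectation (\<lambda>\<omega>. (W i j \<omega> - m i j) * (W k l \<omega> - m k l)))"
  proof -
    have I: "integrable M (\<lambda>\<omega>. (W i j \<omega> - m i j) * (W k l \<omega> - m k l))"
      if "i \<in> S" "j \<in> S" "k \<in> S" "l \<in> S" for i j k l
      unfolding W_def using that S by (intro E_term(1)) auto
    show ?thesis
      by (rule integral_sum4) (use I in auto)
  qed
  also have "\<dots> = (\<Sum>i\<in>S. \<Sum>j\<in>S. \<Sum>k\<in>S. \<Sum>l\<in>S. (PP \<gamma> i j k l + PP \<gamma> i j l k) / 2 - PP \<gamma> i j i i * PP \<gamma> k l k k)"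
    unfolding W_def m_def using S by (intro sum.cong refl, subst E_term(2)) (auto simp: algebra_simps)
  finally show ?thesis .
qed

end



definition FF :: "(nat \<Rightarrow> real) \<Rightarrow> nat \<Rightarrow> nat \<Rightarrow> nat \<Rightarrow> nat \<Rightarrow> real" where
 "FF x i j k l = (if i = j \<or> k = l then 0 else
   (if k = i \<and> l = j then (1 - (x i)\<^sup>2 * (x j)\<^sup>2)\<^sup>2/2 else 0)
 + (if k = j \<and> l = i then (1 - (x i)\<^sup>2 * (x j)\<^sup>2)\<^sup>2/2 else 0)
 + (if k = i \<and> l \<noteq> j then (1 - (x i)\<^sup>2)\<^sup>2/2 * x j * x l else 0)
 + (if l = i \<and> k \<noteq> j then (1 - (x i)\<^sup>2)\<^sup>2/2 * x j * x k else 0)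
 + (if k = j \<and> l \<noteq> i then (1 - (x j)\<^sup>2)\<^sup>2/2 * x i * x l else 0)
 + (if l = j \<and> k \<noteq> i then (1 - (x j)\<^sup>2)\<^sup>2/2 * x i * x k else 0))"

lemma exp_pow_int: "exp (- ((of_int e)\<^sup>2 * (g::real)) / 2) = (exp (- g / 2)) ^ (nat (e\<^sup>2))"
proof -
  have "(of_int e)\<^sup>2 = (of_nat (nat (e\<^sup>2)) :: real)" by simp
  then have "- ((of_int e)\<^sup>2 * g) / 2 = of_nat (nat (e\<^sup>2)) * (- g / 2)" by simp
  then show ?thesis by (simp only: exp_of_nat_mult)
qed

lemma PP_alt: "PP g i j k l = (\<Prod>t\<in>{i,j,k,l}. (exp (- g t / 2)) ^ (nat ((ee i j k l t)\<^sup>2)))"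
  unfolding PP_def by (simp only: exp_pow_int)

lemma C_eq_FF:
  "(PP g i j k l + PP g i j l k) / 2 - PP g i j i i * PP g k l k k = FF (\<lambda>t. exp (- g t / 2)) i j k l"
  unfolding PP_alt
  by (cases "i=j"; cases "i=k"; cases "i=l"; cases "j=k"; cases "j=l"; cases "k=l")
     (simp_all add: ee_def FF_def prod.insert_if power2_eq_square algebra_simps eval_nat_numeral)




lemma PP_two: "PP g i j i i = (if i = j then 1 else exp (- g i / 2) * exp (- g j / 2))"
  unfolding PP_alt
  by (cases "i=j") (simp_all add: ee_def prod.insert_if)

lemma sum_if_out: "(\<Sum>l\<in>A. if P then f l else (0::real)) = (if P then (\<Sum>l\<in>A. f l) else 0)"
  by simp

lemma G1: "finite S \<Longrightarrow> a \<in> S \<Longrightarrow> b \<in> S \<Longrightarrow>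
  (\<Sum>k\<in>S. \<Sum>l\<in>S. (if k = a then (if l = b then c else 0) else (0::real))) = c"
  by (simp only: sum_if_out sum.delta sum.delta' if_True)

lemma G3: "finite S \<Longrightarrow> a \<in> S \<Longrightarrow>
  (\<Sum>k\<in>S. \<Sum>l\<in>S. (if k = a then (if Q l then h l else 0) else (0::real))) = (\<Sum>l\<in>S. if Q l then h l else 0)"
  by (simp only: sum_if_out sum.delta sum.delta' if_True)

lemma G4: "finite S \<Longrightarrow> a \<in> S \<Longrightarrow>
  (\<Sum>k\<in>S. \<Sum>l\<in>S. (if l = a then (if Q k then h k else 0) else (0::real))) = (\<Sum>l\<in>S. if Q l then h l else 0)"
  by (subst sum.swap) (simp only: sum_if_out sum.delta sum.delta' if_True)

lemma G5: "finite S \<Longrightarrow> (\<Sum>l\<in>S. if l \<noteq> j \<and> l \<noteq> i then h l else (0::real)) = (\<Sum>l\<in>S - {i, j}. h l)"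
proof -
  assume f: "finite S"
  have "S - {i, j} = {l\<in>S. l \<noteq> j \<and> l \<noteq> i}" by auto
  then show ?thesis using f by (simp add: sum.inter_filter)
qed

lemma FF_split: "i \<noteq> j \<Longrightarrow> FF x i j k l =
   (if k = i then (if l = j then (1 - (x i)\<^sup>2 * (x j)\<^sup>2)\<^sup>2/2 else 0) else 0)
 + (if k = j then (if l = i then (1 - (x i)\<^sup>2 * (x j)\<^sup>2)\<^sup>2/2 else 0) else 0)
 + (if k = i then (if l \<noteq> j \<and> l \<noteq> i then (1 - (x i)\<^sup>2)\<^sup>2/2 * x j * x l else 0) else 0)
 + (if l = i then (if k \<noteq> j \<and> k \<noteq> i then (1 - (x i)\<^sup>2)\<^sup>2/2 * x j * x k else 0) else 0)
 + (if k = j then (if l \<noteq> i \<and> l \<noteq> j then (1 - (x j)\<^sup>2)\<^sup>2/2 * x i * x l else 0) else 0)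
 + (if l = j then (if k \<noteq> i \<and> k \<noteq> j then (1 - (x j)\<^sup>2)\<^sup>2/2 * x i * x k else 0) else 0)"
  unfolding FF_def by (cases "k = i"; cases "l = j"; cases "k = j"; cases "l = i"; simp)

lemma FF_inner:
  assumes "finite S" "i \<in> S" "j \<in> S" "i \<noteq> j"
  shows "(\<Sum>k\<in>S. \<Sum>l\<in>S. FF x i j k l) = (1 - (x i)\<^sup>2 * (x j)\<^sup>2)\<^sup>2
     + (\<Sum>l\<in>S - {i, j}. (1 - (x i)\<^sup>2)\<^sup>2 * x j * x l)
     + (\<Sum>l\<in>S - {i, j}. (1 - (x j)\<^sup>2)\<^sup>2 * x i * x l)"
proof -
  have e: "{j, i} = {i, j}" by auto
  show ?thesis
    using assms
    apply (simp only: FF_split[OF assms(4)] sum.distrib)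
    apply (simp only: G1 G3 G4 G5 e)
    apply (simp add: sum_divide_distrib[symmetric])
    done
qed

lemma sum_minus_if: "finite S \<Longrightarrow> (\<Sum>j\<in>S - {i}. f j) = (\<Sum>j\<in>S. if j \<noteq> i then f j else (0::real))"
proof -
  assume f: "finite S"
  have "S - {i} = {j\<in>S. j \<noteq> i}" by auto
  then show ?thesis using f by (simp add: sum.inter_filter)
qed

lemma swap_off: "finite S \<Longrightarrow> (\<Sum>i\<in>S. \<Sum>j\<in>S - {i}. f i j) = (\<Sum>j\<in>S. \<Sum>i\<in>S - {j}. (f i j :: real))"
proof -
  assume f: "finite S"
  have "(\<Sum>i\<in>S. \<Sum>j\<in>S - {i}. f i j) = (\<Sum>i\<in>S. \<Sum>j\<in>S. if j \<noteq> i then f i j else 0)"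
    using f by (intro sum.cong refl sum_minus_if)
  also have "\<dots> = (\<Sum>j\<in>S. \<Sum>i\<in>S. if j \<noteq> i then f i j else 0)"
    by (rule sum.swap)
  also have "\<dots> = (\<Sum>j\<in>S. \<Sum>i\<in>S. if i \<noteq> j then f i j else 0)"
    by (intro sum.cong refl) auto
  also have "\<dots> = (\<Sum>j\<in>S. \<Sum>i\<in>S - {j}. f i j)"
    using f by (intro sum.cong refl sum_minus_if[symmetric])
  finally show ?thesis .
qed

lemma FF_total:
  assumes "finite S"
  shows "(\<Sum>i\<in>S. \<Sum>j\<in>S. \<Sum>k\<in>S. \<Sum>l\<in>S. FF x i j k l)
   = (\<Sum>i\<in>S. \<Sum>j\<in>S - {i}. (1 - (x i)\<^sup>2 * (x j)\<^sup>2)\<^sup>2)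
     + 2 * (\<Sum>i\<in>S. \<Sum>j\<in>S - {i}. \<Sum>l\<in>S - {i, j}. (1 - (x i)\<^sup>2)\<^sup>2 * x j * x l)"
proof -
  have "(\<Sum>i\<in>S. \<Sum>j\<in>S. \<Sum>k\<in>S. \<Sum>l\<in>S. FF x i j k l)
     = (\<Sum>i\<in>S. \<Sum>j\<in>S - {i}. \<Sum>k\<in>S. \<Sum>l\<in>S. FF x i j k l)"
  proof (rule sum.cong[OF refl])
    fix i assume i: "i \<in> S"
    have z: "(\<Sum>k\<in>S. \<Sum>l\<in>S. FF x i i k l) = 0" by (simp add: FF_def)
    show "(\<Sum>j\<in>S. \<Sum>k\<in>S. \<Sum>l\<in>S. FF x i j k l) = (\<Sum>j\<in>S - {i}. \<Sum>k\<in>S. \<Sum>l\<in>S. FF x i j k l)"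
      using sum.remove[OF assms i, of "\<lambda>j. \<Sum>k\<in>S. \<Sum>l\<in>S. FF x i j k l"] z by simp
  qed
  also have "\<dots> = (\<Sum>i\<in>S. \<Sum>j\<in>S - {i}. (1 - (x i)\<^sup>2 * (x j)\<^sup>2)\<^sup>2
     + (\<Sum>l\<in>S - {i, j}. (1 - (x i)\<^sup>2)\<^sup>2 * x j * x l)
     + (\<Sum>l\<in>S - {i, j}. (1 - (x j)\<^sup>2)\<^sup>2 * x i * x l))"
    using assms by (intro sum.cong refl FF_inner) auto
  also have "\<dots> = (\<Sum>i\<in>S. \<Sum>j\<in>S - {i}. (1 - (x i)\<^sup>2 * (x j)\<^sup>2)\<^sup>2)
     + (\<Sum>i\<in>S. \<Sum>j\<in>S - {i}. \<Sum>l\<in>S - {i, j}. (1 - (x i)\<^sup>2)\<^sup>2 * x j * x l)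
     + (\<Sum>i\<in>S. \<Sum>j\<in>S - {i}. \<Sum>l\<in>S - {i, j}. (1 - (x j)\<^sup>2)\<^sup>2 * x i * x l)"
    by (simp only: sum.distrib)
  also have "(\<Sum>i\<in>S. \<Sum>j\<in>S - {i}. \<Sum>l\<in>S - {i, j}. (1 - (x j)\<^sup>2)\<^sup>2 * x i * x l)
     = (\<Sum>j\<in>S. \<Sum>i\<in>S - {j}. \<Sum>l\<in>S - {i, j}. (1 - (x j)\<^sup>2)\<^sup>2 * x i * x l)"
    by (rule swap_off[OF assms])
  also have "\<dots> = (\<Sum>i\<in>S. \<Sum>j\<in>S - {i}. \<Sum>l\<in>S - {i, j}. (1 - (x i)\<^sup>2)\<^sup>2 * x j * x l)"
    by (simp add: insert_commute)
  finally show ?thesis by simp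
qed



theorem lemma1:
  fixes M :: "'a measure" and N :: nat and \<gamma> :: "nat \<Rightarrow> real"
    and \<Phi> :: "nat \<Rightarrow> 'a \<Rightarrow> real" and S :: "nat set"
  assumes "prob_space M"
    and "\<And>i. i \<in> {1..N} \<Longrightarrow> 0 \<le> \<gamma> i"
    and "prob_space.indep_vars M (\<lambda>_. borel) \<Phi> {1..N}"
    and "\<And>i. i \<in> {1..N} \<Longrightarrow> \<Phi> i \<in> borel_measurable M"
    and "\<And>i. i \<in> {1..N} \<Longrightarrow> distr M borel (\<Phi> i) = wrapped_normal (\<gamma> i)"
    and "S \<subseteq> {1..N}"
  defines "v \<equiv> \<lambda>i. exp (- \<gamma> i)"
  shows "(prob_space.expectation M (\<lambda>\<omega>. beam_gain (\<lambda>i. \<Phi> i \<omega>) S)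
           = real (card S) + (\<Sum>i\<in>S. \<Sum>j\<in>S - {i}. sqrt (v i * v j)))
         \<and> (prob_space.variance M (\<lambda>\<omega>. beam_gain (\<lambda>i. \<Phi> i \<omega>) S)
           = (\<Sum>i\<in>S. \<Sum>j\<in>S - {i}. (1 - v i * v j)\<^sup>2)
             + 2 * (\<Sum>i\<in>S. \<Sum>j\<in>S - {i}. \<Sum>k\<in>S - {i, j}. (1 - v i)\<^sup>2 * sqrt (v j * v k)))"
proof -
  have B: "beam M N \<gamma> \<Phi>"
    unfolding beam_def beam_axioms_def using assms(1-5) by auto
  interpret beam M N \<gamma> \<Phi> by (rule B)
  have fin: "finite S" using assms(6) finite_subset by blast
  define x where "x t = exp (- \<gamma> t / 2)" for t
  have v: "v t = (x t)\<^sup>2" for t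
    unfolding v_def x_def by (simp add: power2_eq_square exp_add[symmetric])
  have sq: "sqrt (v j * v k) = x j * x k" for j k
    unfolding v x_def by (simp add: real_sqrt_mult)
  have sq': "sqrt ((x j)\<^sup>2 * (x k)\<^sup>2) = x j * x k" for j k
    using sq[of j k] by (simp only: v)
  have x': "(\<lambda>t. exp (- \<gamma> t / 2)) = x" unfolding x_def ..
  have "expectation (\<lambda>\<omega>. beam_gain (\<lambda>i. \<Phi> i \<omega>) S) = (\<Sum>i\<in>S. \<Sum>j\<in>S. PP \<gamma> i j i i)"
    by (rule mean_G[OF assms(6)])
  also have "\<dots> = (\<Sum>i\<in>S. 1 + (\<Sum>j\<in>S - {i}. x i * x j))"
  proof (rule sum.cong[OF refl])
    fix i assume i: "i \<in> S"
    have "(\<Sum>j\<in>S. PP \<gamma> i j i i) = PP \<gamma> i i i i + (\<Sum>j\<in>S - {i}. PP \<gamma> i j i i)"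
      by (rule sum.remove[OF fin i])
    also have "\<dots> = 1 + (\<Sum>j\<in>S - {i}. x i * x j)"
      by (simp add: PP_two x_def)
    finally show "(\<Sum>j\<in>S. PP \<gamma> i j i i) = 1 + (\<Sum>j\<in>S - {i}. x i * x j)" .
  qed
  also have "\<dots> = real (card S) + (\<Sum>i\<in>S. \<Sum>j\<in>S - {i}. sqrt (v i * v j))"
    by (simp add: sum.distrib sq)
  finally have E: "expectation (\<lambda>\<omega>. beam_gain (\<lambda>i. \<Phi> i \<omega>) S) = real (card S) + (\<Sum>i\<in>S. \<Sum>j\<in>S - {i}. sqrt (v i * v j))" .
  have "variance (\<lambda>\<omega>. beam_gain (\<lambda>i. \<Phi> i \<omega>) S) = (\<Sum>i\<in>S. \<Sum>j\<in>S. \<Sum>k\<in>S. \<Sum>l\<in>S. FF x i j k l)"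
    unfolding var_G[OF assms(6)] C_eq_FF x' ..
  also have "\<dots> = (\<Sum>i\<in>S. \<Sum>j\<in>S - {i}. (1 - (x i)\<^sup>2 * (x j)\<^sup>2)\<^sup>2)
     + 2 * (\<Sum>i\<in>S. \<Sum>j\<in>S - {i}. \<Sum>l\<in>S - {i, j}. (1 - (x i)\<^sup>2)\<^sup>2 * x j * x l)"
    by (rule FF_total[OF fin])
  also have "\<dots> = (\<Sum>i\<in>S. \<Sum>j\<in>S - {i}. (1 - v i * v j)\<^sup>2)
             + 2 * (\<Sum>i\<in>S. \<Sum>j\<in>S - {i}. \<Sum>k\<in>S - {i, j}. (1 - v i)\<^sup>2 * sqrt (v j * v k))"
    by (simp only: v sq' mult.assoc)
  finally show ?thesis using E by simp
qed


end
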